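(* Consider the infinite-width limit ($N\to\infty$) of a two-layer linear network in the $\mu$P/mean-field parameterization with feature-learning strength $\gamma_0$ (as described in the context), trained by gradient flow on the MSE loss, with one data point per task: task $\mathcal{T}_1$ has input $\mathbf{x}_1$, task $\mathcal{T}_2$ has input $\mathbf{x}_2$, with $K^x_{11}=K^x_{22}=1$, $K^x_{12}=\rho\in[0,1]$, and both tasks have the same target $y$, and the initial residuals are $\Delta_1(0)=\Delta_2(0)=y$. Train on $\mathcal{T}_1$ only, for time $t$. Writing $\Delta_2(t)=\Delta_2^{(0)}(t)+\gamma_0\Delta_2^{(1)}(t)+\gamma_0^2\Delta_2^{(2)}(t)+O(\gamma_0^3)$, one has $\Delta_2^{(1)}\equiv 0$, $\lim_{t\to\infty}\Delta_2^{(0)}(t)=y(1-\rho)$ and $\lim_{t\to\infty}\Delta_2^{(2)}(t)=0$. Consequently the loss on task $\mathcal{T}_2$ after infinitely long training on $\mathcal{T}_1$ is $\frac{y^2}{2}(1-\rho)^2+O(\gamma_0^3)$, independent of $\gamma_0$ up to second order.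
   Context: Network: $f(\mathbf{x})=\frac{1}{\gamma_0N}\mathbf{w}\cdot\mathbf{h}(\mathbf{x})$, $\mathbf{h}(\mathbf{x})=D^{-1/2}\mathbf{W}^0\mathbf{x}$, weights initialized i.i.d. $\mathcal{N}(0,1)$, learning rate $\gamma_0^2N$. $K^x_{ij}=\frac1D\mathbf{x}_i\cdot\mathbf{x}_j$. Residual $\Delta_i=y-f(\mathbf{x}_i)$; in the infinite-width limit, during training on task $\mathcal{T}_1$, $\frac{d}{dt}\Delta_i=-K_{i1}(t)\Delta_1$ where $K_{ij}=\Phi_{ij}+G\,K^x_{ij}$ with limiting kernels $\Phi_{ij}=\mathbb{E}[h_ih_j]$, $G=\mathbb{E}[z^2]$ computed from the single-site process $h_i(t)=\chi_i+\gamma_0\int_0^t\Delta_1(s)z(s)K^x_{i1}ds$, $z(t)=\xi+\gamma_0\int_0^t\Delta_1(s)h_1(s)ds$, where $(\chi_1,\chi_2)$ is centered Gaussian with covariance $K^x$ and $\xi\sim\mathcal{N}(0,1)$ independent. The expansion is in powers of $\gamma_0$ with $\gamma_0$-independent coefficients. The loss on task $\mathcal{T}_2$ is $\frac12\Delta_2^2$. *)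

theory Defs
  imports "HOL-Probability.Probability" "HOL-Library.Landau_Symbols"
begin

definition Kx :: "real \<Rightarrow> nat \<Rightarrow> nat \<Rightarrow> real" where
  "Kx \<rho> i j = (if i = j then 1 else \<rho>)"

definition Kker :: "'a measure \<Rightarrow> real \<Rightarrow> (nat \<Rightarrow> real \<Rightarrow> 'a \<Rightarrow> real)
    \<Rightarrow> (real \<Rightarrow> 'a \<Rightarrow> real) \<Rightarrow> nat \<Rightarrow> nat \<Rightarrow> real \<Rightarrow> real" where
  "Kker M \<rho> h z i j t =
     (\<integral>\<omega>. h i t \<omega> * h j t \<omega> \<partial>M) + (\<integral>\<omega>. (z t \<omega>)\<^sup>2 \<partial>M) * Kx \<rho> i j"

text \<open>The infinite-width (DMFT) dynamics while training on task T1 (single point x1),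
  for feature learning strength g0, target y, residuals Delta 1, Delta 2 (time t \<ge> 0),
  single-site fields h 1, h 2, z driven by the Gaussian sources chi 1, chi 2, xi.\<close>
definition iw_dynamics ::
  "'a measure \<Rightarrow> real \<Rightarrow> real \<Rightarrow> real \<Rightarrow> (nat \<Rightarrow> 'a \<Rightarrow> real) \<Rightarrow> ('a \<Rightarrow> real)
   \<Rightarrow> (nat \<Rightarrow> real \<Rightarrow> real) \<Rightarrow> (nat \<Rightarrow> real \<Rightarrow> 'a \<Rightarrow> real) \<Rightarrow> (real \<Rightarrow> 'a \<Rightarrow> real) \<Rightarrow> bool" where
  "iw_dynamics M \<rho> g0 y chi xi \<Delta> h z \<longleftrightarrow>
     (\<forall>i\<in>{1,2}. \<Delta> i 0 = y) \<and>
     (\<forall>i\<in>{1,2}. \<forall>t\<ge>0. \<forall>\<omega>\<in>space M.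
        ((\<lambda>s. g0 * \<Delta> 1 s * z s \<omega> * Kx \<rho> i 1) has_integral (h i t \<omega> - chi i \<omega>)) {0..t}) \<and>
     (\<forall>t\<ge>0. \<forall>\<omega>\<in>space M.
        ((\<lambda>s. g0 * \<Delta> 1 s * h 1 s \<omega>) has_integral (z t \<omega> - xi \<omega>)) {0..t}) \<and>
     (\<forall>i\<in>{1,2}. \<forall>t\<ge>0.
        (\<Delta> i has_real_derivative (- Kker M \<rho> h z i 1 t * \<Delta> 1 t)) (at t within {0..}))"

end

theory Submission
  imports Defs "HOL-Real_Asymp.Real_Asymp"
begin


lemma decr_within:
  fixes f f' :: "real \<Rightarrow> real"
  assumes d: "\<And>t. t \<in> {0..T} \<Longrightarrow> (f has_real_derivative f' t) (at t within {0..T})"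
    and n: "\<And>t. t \<in> {0..T} \<Longrightarrow> f' t \<le> 0"
    and xy: "0 \<le> x" "x \<le> y" "y \<le> T"
  shows "f y \<le> f x"
proof -
  have c: "continuous_on {0..T} f" using d by (rule DERIV_continuous_on)
  have "continuous_on {x..y} f" using c by (rule continuous_on_subset) (use xy in auto)
  moreover have "\<exists>D. (f has_real_derivative D) (at u) \<and> D \<le> 0" if "x < u" "u < y" for u
  proof -
    have "at u within {0..T} = at u" using that xy by (intro at_within_interior) auto
    then show ?thesis using d[of u] n[of u] that xy by auto
  qed
  ultimately show ?thesis using DERIV_nonpos_imp_decreasing_open[of x y f] xy by auto
qed

lemma bound_within:
  fixes f f' :: "real \<Rightarrow> real"
  assumes d: "\<And>t. t \<in> {0..T} \<Longrightarrow> (f has_real_derivative f' t) (at t within {0..T})"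
    and b: "\<And>t. t \<in> {0..T} \<Longrightarrow> \<bar>f' t\<bar> \<le> B"
    and t: "0 \<le> t" "t \<le> T"
  shows "\<bar>f t - f 0\<bar> \<le> B * t"
proof -
  have 1: "(\<lambda>s. f s - B * s) t \<le> (\<lambda>s. f s - B * s) 0"
  proof (rule decr_within[where f = "\<lambda>s. f s - B * s" and f' = "\<lambda>s. f' s - B" and T = T])
    show "((\<lambda>s. f s - B * s) has_real_derivative f' s - B) (at s within {0..T})" if "s \<in> {0..T}" for s
      using d[OF that] by (auto intro!: derivative_eq_intros)
    show "f' s - B \<le> 0" if "s \<in> {0..T}" for s using b[OF that] by (auto simp: abs_le_iff)
  qed (use t in auto)
  have 2: "(\<lambda>s. - f s - B * s) t \<le> (\<lambda>s. - f s - B * s) 0"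
  proof (rule decr_within[where f = "\<lambda>s. - f s - B * s" and f' = "\<lambda>s. - f' s - B" and T = T])
    show "((\<lambda>s. - f s - B * s) has_real_derivative - f' s - B) (at s within {0..T})" if "s \<in> {0..T}" for s
      using d[OF that] by (auto intro!: derivative_eq_intros)
    show "- f' s - B \<le> 0" if "s \<in> {0..T}" for s using b[OF that] by (auto simp: abs_le_iff)
  qed (use t in auto)
  show ?thesis using 1 2 by auto
qed

lemma taylor_cosh:
  fixes u :: real
  shows "\<bar>exp u + exp (-u) - 2 - u^2\<bar> \<le> exp \<bar>u\<bar> * u^4 / 12"
proof -
  obtain a where a: "\<bar>a\<bar> \<le> \<bar>u\<bar>" "exp u = (\<Sum>m<4. u^m / fact m) + exp a / fact 4 * u^4"
    using Maclaurin_exp_le[of u 4] by blast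
  obtain b where b: "\<bar>b\<bar> \<le> \<bar>-u\<bar>" "exp (-u) = (\<Sum>m<4. (-u)^m / fact m) + exp b / fact 4 * (-u)^4"
    using Maclaurin_exp_le[of "-u" 4] by blast
  have f4: "fact 4 = (24::real)" by (simp add: fact_numeral)
  have e: "exp u + exp (-u) - 2 - u^2 = (exp a + exp b) * u^4 / 24"
    using a(2) b(2) by (simp add: f4 eval_nat_numeral field_simps)
  have "exp a \<le> exp \<bar>u\<bar>" "exp b \<le> exp \<bar>u\<bar>" using a(1) b(1) by auto
  then have "exp a + exp b \<le> 2 * exp \<bar>u\<bar>" by linarith
  then have "(exp a + exp b) * u^4 / 24 \<le> 2 * exp \<bar>u\<bar> * u^4 / 24"
    by (intro divide_right_mono mult_right_mono) auto
  moreover have "0 \<le> (exp a + exp b) * u^4 / 24" by simp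
  ultimately show ?thesis using e by (simp only: abs_of_nonneg)
qed

lemma K_ge2: "2 \<le> exp (x::real) + exp (-x)"
proof -
  have h: "(exp (x/2) - exp (-x/2))^2 \<ge> 0" by (rule zero_le_power2)
  have "(exp (x/2) - exp (-x/2))^2 = exp x + exp (-x) - 2"
  proof -
    have "exp (x/2) * exp (-x/2) = 1" by (simp flip: exp_add)
    moreover have "exp (x/2) * exp (x/2) = exp x" "exp (-x/2) * exp (-x/2) = exp (-x)" by (simp_all flip: exp_add)
    ultimately show ?thesis by (simp add: power2_eq_square algebra_simps)
  qed
  with h show ?thesis by linarith
qed

definition CC :: "real \<Rightarrow> real \<Rightarrow> real" where
  "CC y T = (let Y = \<bar>y\<bar>; A = Y*T; c1 = exp(2*A)*16*A^4/12; c2 = 4*A^2 + c1; c3 = c2*Y*T;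
     c4 = c3*T in (c1*Y + 4*c4*(A+Y)*Y + Y^2*c3)*T)"

definition JJ :: "real \<Rightarrow> real" where
  "JJ t = t - 3/4 + exp(-2*t) - exp(-4*t)/4"

lemma core_est:
  fixes \<Delta> \<tau> :: "real \<Rightarrow> real" and g y T :: real
  assumes g: "0 < g" "g \<le> 1" and T: "0 \<le> T"
    and dD: "\<And>t. t \<in> {0..T} \<Longrightarrow>
       (\<Delta> has_real_derivative (- (exp (2 * \<tau> t) + exp (- (2 * \<tau> t))) * \<Delta> t)) (at t within {0..T})"
    and dT: "\<And>t. t \<in> {0..T} \<Longrightarrow> (\<tau> has_real_derivative g * \<Delta> t) (at t within {0..T})"
    and D0: "\<Delta> 0 = y" and t0: "\<tau> 0 = 0"
  shows "\<bar>\<Delta> T - y * exp (-2*T) + g^2 * y^3 * exp (-2*T) * JJ T\<bar> \<le> CC y T * g^3"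
proof -
  define Y where "Y = \<bar>y\<bar>"
  define A where "A = Y*T"
  define c1 where "c1 = exp(2*A)*16*A^4/12"
  define c2 where "c2 = 4*A^2 + c1"
  define c3 where "c3 = c2*Y*T"
  define c4 where "c4 = c3*T"
  define c5 where "c5 = c1*Y + 4*c4*(A+Y)*Y + Y^2*c3"
  have CCe: "CC y T = c5 * T"
    by (simp add: CC_def Let_def c5_def c4_def c3_def c2_def c1_def A_def Y_def)
  have Y0: "0 \<le> Y" and A0: "0 \<le> A" using T by (auto simp: Y_def A_def)
  have c10: "0 \<le> c1" using A0 by (simp add: c1_def)
  have c20: "0 \<le> c2" using c10 by (simp add: c2_def)
  have c30: "0 \<le> c3" using c20 Y0 T by (simp add: c3_def)
  have c40: "0 \<le> c4" using c30 T by (simp add: c4_def)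
  define K where "K t = exp (2 * \<tau> t) + exp (- (2 * \<tau> t))" for t
  have K2: "0 \<le> K t - 2" for t using K_ge2[of "2 * \<tau> t"] by (simp add: K_def)
  define P where "P t = \<Delta> t * exp (2 * t)" for t
  have dP: "(P has_real_derivative (- (K t - 2) * P t)) (at t within {0..T})" if "t \<in> {0..T}" for t
    unfolding P_def
    by (rule derivative_eq_intros dD[OF that] | simp)+ (simp add: K_def algebra_simps)
  have P0: "P 0 = y" by (simp add: P_def D0)
  have DP: "\<Delta> t = P t * exp (-2 * t)" for t
    by (simp add: P_def mult.assoc flip: exp_add)
  have Pb: "\<bar>P t\<bar> \<le> Y" if "t \<in> {0..T}" for t
  proof -
    have "(\<lambda>s. (P s)^2) t \<le> (\<lambda>s. (P s)^2) 0"
    proof (rule decr_within[where f = "\<lambda>s. (P s)^2" and f' = "\<lambda>s. 2 * P s * (- (K s - 2) * P s)" and T = T])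
      show "((\<lambda>s. (P s)^2) has_real_derivative 2 * P s * (- (K s - 2) * P s)) (at s within {0..T})"
        if "s \<in> {0..T}" for s
        by (rule derivative_eq_intros dP[OF that] | simp)+
      show "2 * P s * (- (K s - 2) * P s) \<le> 0" for s
      proof -
        have "0 \<le> (K s - 2) * (P s * P s)" using K2[of s] by simp
        then show ?thesis by (simp add: algebra_simps)
      qed
    qed (use that in auto)
    then have "(P t)^2 \<le> Y^2" by (simp add: P0 Y_def)
    then show ?thesis using Y0 by (simp add: abs_le_square_iff[symmetric] abs_of_nonneg)
  qed
  have Db: "\<bar>\<Delta> t\<bar> \<le> Y" if "t \<in> {0..T}" for t
  proof -
    have "\<bar>\<Delta> t\<bar> = \<bar>P t\<bar> * exp (-2*t)" by (simp add: DP abs_mult)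
    also have "\<dots> \<le> Y * 1" using Pb[OF that] that by (intro mult_mono) auto
    finally show ?thesis by simp
  qed
  have tb: "\<bar>\<tau> t\<bar> \<le> g * A" if "t \<in> {0..T}" for t
  proof -
    have "\<bar>\<tau> t - \<tau> 0\<bar> \<le> (g * Y) * t"
      by (rule bound_within[OF dT]) (use Db g that in \<open>auto simp: abs_mult intro: mult_left_mono\<close>)
    also have "\<dots> \<le> (g * Y) * T" using that g Y0 by (intro mult_left_mono) auto
    finally show ?thesis by (simp add: t0 A_def)
  qed
  have Kt: "\<bar>K t - 2 - 4 * (\<tau> t)^2\<bar> \<le> c1 * g^4" if "t \<in> {0..T}" for t
  proof -
    have "\<bar>K t - 2 - 4 * (\<tau> t)^2\<bar> \<le> exp \<bar>2 * \<tau> t\<bar> * (2 * \<tau> t)^4 / 12"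
      using taylor_cosh[of "2 * \<tau> t"] by (simp add: K_def power_mult_distrib)
    also have "\<dots> \<le> exp (2 * A) * (16 * (A^4 * g^4)) / 12"
    proof -
      have "\<bar>\<tau> t\<bar> \<le> A" using tb[OF that] g A0 by (smt (verit) mult_left_le_one_le)
      then have 1: "exp \<bar>2 * \<tau> t\<bar> \<le> exp (2 * A)" by simp
      have "\<bar>\<tau> t\<bar>^4 \<le> (g*A)^4" using tb[OF that] by (intro power_mono) auto
      then have 2: "(2 * \<tau> t)^4 \<le> 16 * (A^4 * g^4)"
        by (simp add: power_mult_distrib power_even_abs_numeral mult.commute)
      show ?thesis using 1 2 by (intro divide_right_mono mult_mono) auto
    qed
    finally show ?thesis by (simp add: c1_def mult_ac)
  qed
  have Kb: "\<bar>K t - 2\<bar> \<le> c2 * g^2" if "t \<in> {0..T}" for t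
  proof -
    have "(\<tau> t)^2 \<le> (g*A)^2" using tb[OF that] by (simp add: abs_le_square_iff[symmetric])
    moreover have "g^4 \<le> g^2" using g by (simp add: power_decreasing)
    then have "c1 * g^4 \<le> c1 * g^2" using c10 by (intro mult_left_mono)
    ultimately show ?thesis using Kt[OF that] K2[of t] c10
      by (simp add: c2_def algebra_simps power_mult_distrib abs_le_iff)
  qed
  have PyB: "\<bar>P t - y\<bar> \<le> c3 * g^2" if "t \<in> {0..T}" for t
  proof -
    have "\<bar>P t - P 0\<bar> \<le> (c2 * g^2 * Y) * t"
    proof (rule bound_within[OF dP])
      show "\<bar>- (K s - 2) * P s\<bar> \<le> c2 * g^2 * Y" if "s \<in> {0..T}" for s
        using Kb[OF that] Pb[OF that] by (simp add: abs_mult mult_mono c20)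
    qed (use that in auto)
    also have "\<dots> \<le> (c2 * g^2 * Y) * T" using that c20 Y0 by (intro mult_left_mono) auto
    finally show ?thesis by (simp add: P0 c3_def algebra_simps)
  qed
  define e where "e t = \<tau> t - g * (y * (1 - exp (-2*t)) / 2)" for t
  have de: "(e has_real_derivative (g * (exp (-2*t) * (P t - y)))) (at t within {0..T})" if "t \<in> {0..T}" for t
    unfolding e_def
    by (rule derivative_eq_intros dT[OF that] | simp)+ (simp add: DP algebra_simps)
  have eb: "\<bar>e t\<bar> \<le> c4 * g^3" if "t \<in> {0..T}" for t
  proof -
    have "\<bar>e t - e 0\<bar> \<le> (c3 * g^3) * t"
    proof (rule bound_within[OF de])
      show "abs (g * (exp (-2*u) * (P u - y))) \<le> c3 * g^3" if "u \<in> {0..T}" for u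
      proof -
        have "abs (g * (exp (-2*u) * (P u - y))) = g * (exp (-2*u) * \<bar>P u - y\<bar>)" using g by (simp add: abs_mult)
        also have "\<dots> \<le> g * (1 * (c3 * g^2))" using that PyB[OF that] g c30
          by (intro mult_left_mono mult_mono) auto
        finally show ?thesis by (simp add: power3_eq_cube power2_eq_square algebra_simps)
      qed
    qed (use that in auto)
    also have "\<dots> \<le> (c3 * g^3) * T" using that c30 g by (intro mult_left_mono) auto
    finally show ?thesis by (simp add: e_def t0 c4_def algebra_simps)
  qed
  define Q where "Q t = P t - y + g^2 * y^3 * JJ t" for t
  have dQ: "(Q has_real_derivative (- (K t - 2) * P t + g^2 * y^3 * (1 - exp (-2*t))^2)) (at t within {0..T})"
    if "t \<in> {0..T}" for t
  proof -
    have e4: "exp (- (t * 4)) = exp (- (t * 2)) * exp (- (t * 2))" by (simp flip: exp_add)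
    show ?thesis
      unfolding Q_def JJ_def
      by (rule derivative_eq_intros dP[OF that] | simp)+ (simp add: e4 power2_eq_square algebra_simps)
  qed
  have Qb: "\<bar>- (K t - 2) * P t + g^2 * y^3 * (1 - exp (-2*t))^2\<bar> \<le> c5 * g^4" if "t \<in> {0..T}" for t
  proof -
    define s0 where "s0 = y * (1 - exp (-2*t)) / 2"
    have ts: "\<tau> t = e t + g * s0" by (simp add: e_def s0_def)
    have s0b: "\<bar>s0\<bar> \<le> Y / 2"
    proof -
      have a: "\<bar>1 - exp (-2*t)\<bar> \<le> 1" using that by auto
      have "\<bar>s0\<bar> = \<bar>y\<bar> * \<bar>1 - exp (-2*t)\<bar> / 2" by (simp add: s0_def abs_mult)
      also have "\<dots> \<le> \<bar>y\<bar> * 1 / 2" using a by (intro divide_right_mono mult_left_mono) auto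
      finally show ?thesis by (simp add: Y_def)
    qed
    have dec: "- (K t - 2) * P t + g^2 * y^3 * (1 - exp (-2*t))^2 =
        - (K t - 2 - 4 * (\<tau> t)^2) * P t - 4 * (e t * (\<tau> t + g * s0)) * P t - 4 * g^2 * s0^2 * (P t - y)"
      unfolding ts s0_def by (simp add: field_simps power2_eq_square power3_eq_cube)
    have t1: "\<bar>(K t - 2 - 4 * (\<tau> t)^2) * P t\<bar> \<le> c1 * g^4 * Y"
      using Kt[OF that] Pb[OF that] c10 by (simp add: abs_mult mult_mono)
    have tsb: "\<bar>\<tau> t + g * s0\<bar> \<le> g * (A + Y)"
    proof -
      have "\<bar>g * s0\<bar> \<le> g * Y" using s0b g Y0 by (simp add: abs_mult)
      then show ?thesis using tb[OF that] by (simp add: algebra_simps)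
    qed
    have t2: "\<bar>4 * (e t * (\<tau> t + g * s0)) * P t\<bar> \<le> 4 * ((c4 * g^3) * (g * (A + Y))) * Y"
      using eb[OF that] tsb Pb[OF that] c40 g
      by (simp add: abs_mult mult_mono)
    have t3: "\<bar>4 * g^2 * s0^2 * (P t - y)\<bar> \<le> 4 * g^2 * (Y/2)^2 * (c3 * g^2)"
    proof -
      have "s0^2 \<le> (Y/2)^2" using s0b by (simp add: abs_le_square_iff[symmetric])
      then show ?thesis using PyB[OF that] by (simp add: abs_mult mult_mono)
    qed
    have "\<bar>- (K t - 2) * P t + g^2 * y^3 * (1 - exp (-2*t))^2\<bar> \<le>
       c1 * g^4 * Y + 4 * ((c4 * g^3) * (g * (A + Y))) * Y + 4 * g^2 * (Y/2)^2 * (c3 * g^2)"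
      unfolding dec using t1 t2 t3 by (smt (verit) abs_minus_cancel mult_minus_left)
    also have "\<dots> = c5 * g^4" by (simp add: c5_def power2_eq_square power3_eq_cube power4_eq_xxxx algebra_simps)
    finally show ?thesis .
  qed
  have QT: "\<bar>Q T - Q 0\<bar> \<le> (c5 * g^4) * T"
    by (rule bound_within[OF dQ Qb]) (use T in auto)
  have Q0: "Q 0 = 0" by (simp add: Q_def JJ_def P0)
  have c50: "0 \<le> c5" using c10 c30 c40 Y0 A0 by (simp add: c5_def)
  have "\<Delta> T - y * exp (-2*T) + g^2 * y^3 * exp (-2*T) * JJ T = exp (-2*T) * Q T"
    by (simp add: Q_def DP algebra_simps)
  then have "\<bar>\<Delta> T - y * exp (-2*T) + g^2 * y^3 * exp (-2*T) * JJ T\<bar> = exp (-2*T) * \<bar>Q T\<bar>"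
    by (simp add: abs_mult)
  also have "\<dots> \<le> 1 * ((c5 * g^4) * T)" using QT Q0 T by (intro mult_mono) auto
  also have "\<dots> \<le> (c5 * g^3) * T"
  proof -
    have "g^4 \<le> g^3" using g by (simp add: power_decreasing)
    then show ?thesis using c50 T by (simp add: mult_left_mono mult_right_mono)
  qed
  finally show ?thesis by (simp add: CCe algebra_simps)
qed

lemma ode_omega:
  fixes f H Z \<tau> :: "real \<Rightarrow> real"
  assumes T: "0 \<le> T" and cf: "continuous_on {0..T} f"
    and dT: "\<And>t. t \<in> {0..T} \<Longrightarrow> (\<tau> has_real_derivative f t) (at t within {0..T})"
    and t0: "\<tau> 0 = 0"
    and iH: "\<And>t. t \<in> {0..T} \<Longrightarrow> ((\<lambda>s. f s * Z s) has_integral (H t - c1)) {0..t}"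
    and iZ: "\<And>t. t \<in> {0..T} \<Longrightarrow> ((\<lambda>s. f s * H s) has_integral (Z t - c2)) {0..t}"
    and t: "t \<in> {0..T}"
  shows "H t = (exp (\<tau> t) + exp (- \<tau> t)) / 2 * c1 + (exp (\<tau> t) - exp (- \<tau> t)) / 2 * c2"
    and "Z t = (exp (\<tau> t) + exp (- \<tau> t)) / 2 * c2 + (exp (\<tau> t) - exp (- \<tau> t)) / 2 * c1"
proof -
  have intH: "(\<lambda>s. f s * Z s) integrable_on {0..T}" using iH[of T] T by auto
  have intZ: "(\<lambda>s. f s * H s) integrable_on {0..T}" using iZ[of T] T by auto
  have Heq: "H u = c1 + integral {0..u} (\<lambda>s. f s * Z s)" if "u \<in> {0..T}" for u
    using integral_unique[OF iH[OF that]] by simp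
  have Zeq: "Z u = c2 + integral {0..u} (\<lambda>s. f s * H s)" if "u \<in> {0..T}" for u
    using integral_unique[OF iZ[OF that]] by simp
  have H0: "H 0 = c1" using Heq[of 0] T by simp
  have Z0: "Z 0 = c2" using Zeq[of 0] T by simp
  have cH: "continuous_on {0..T} H"
  proof -
    have "continuous_on {0..T} (\<lambda>u. c1 + integral {0..u} (\<lambda>s. f s * Z s))"
      by (intro continuous_intros indefinite_integral_continuous_1 intH)
    then show ?thesis by (rule continuous_on_cong[THEN iffD1, rotated 2]) (auto simp: Heq)
  qed
  have cZ: "continuous_on {0..T} Z"
  proof -
    have "continuous_on {0..T} (\<lambda>u. c2 + integral {0..u} (\<lambda>s. f s * H s))"
      by (intro continuous_intros indefinite_integral_continuous_1 intZ)
    then show ?thesis by (rule continuous_on_cong[THEN iffD1, rotated 2]) (auto simp: Zeq)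
  qed
  have dH: "(H has_real_derivative f u * Z u) (at u within {0..T})" if u: "u \<in> {0..T}" for u
  proof -
    have c: "continuous_on {0..T} (\<lambda>s. f s * Z s)" by (intro continuous_intros cf cZ)
    have "((\<lambda>u. integral {0..u} (\<lambda>s. f s * Z s)) has_real_derivative f u * Z u) (at u within {0..T})"
      using integral_has_vector_derivative[OF c u]
      by (simp add: has_real_derivative_iff_has_vector_derivative)
    then have "((\<lambda>u. c1 + integral {0..u} (\<lambda>s. f s * Z s)) has_real_derivative f u * Z u) (at u within {0..T})"
      using DERIV_add[OF DERIV_const[of c1]] by simp
    then show ?thesis
      by (rule has_field_derivative_transform_within[where d=1]) (use u Heq in auto)
  qed
  have dZ: "(Z has_real_derivative f u * H u) (at u within {0..T})" if u: "u \<in> {0..T}" for u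
  proof -
    have c: "continuous_on {0..T} (\<lambda>s. f s * H s)" by (intro continuous_intros cf cH)
    have "((\<lambda>u. integral {0..u} (\<lambda>s. f s * H s)) has_real_derivative f u * H u) (at u within {0..T})"
      using integral_has_vector_derivative[OF c u]
      by (simp add: has_real_derivative_iff_has_vector_derivative)
    then have "((\<lambda>u. c2 + integral {0..u} (\<lambda>s. f s * H s)) has_real_derivative f u * H u) (at u within {0..T})"
      using DERIV_add[OF DERIV_const[of c2]] by simp
    then show ?thesis
      by (rule has_field_derivative_transform_within[where d=1]) (use u Zeq in auto)
  qed
  have "\<exists>c. \<forall>u\<in>{0..T}. (H u + Z u) * exp (- \<tau> u) = c"
  proof (rule has_field_derivative_zero_constant)
    fix u assume u: "u \<in> {0..T}"
    show "((\<lambda>u. (H u + Z u) * exp (- \<tau> u)) has_field_derivative 0) (at u within {0..T})"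
      by (rule derivative_eq_intros dH[OF u] dZ[OF u] dT[OF u] | simp)+ (simp add: algebra_simps)
  qed simp
  then obtain cp where cp: "\<And>u. u \<in> {0..T} \<Longrightarrow> (H u + Z u) * exp (- \<tau> u) = cp" by blast
  have "\<exists>c. \<forall>u\<in>{0..T}. (H u - Z u) * exp (\<tau> u) = c"
  proof (rule has_field_derivative_zero_constant)
    fix u assume u: "u \<in> {0..T}"
    show "((\<lambda>u. (H u - Z u) * exp (\<tau> u)) has_field_derivative 0) (at u within {0..T})"
      by (rule derivative_eq_intros dH[OF u] dZ[OF u] dT[OF u] | simp)+ (simp add: algebra_simps)
  qed simp
  then obtain cm where cm: "\<And>u. u \<in> {0..T} \<Longrightarrow> (H u - Z u) * exp (\<tau> u) = cm" by blast
  have cp0: "cp = c1 + c2" using cp[of 0] T H0 Z0 t0 by simp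
  have cm0: "cm = c1 - c2" using cm[of 0] T H0 Z0 t0 by simp
  have p: "H t + Z t = (c1 + c2) * exp (\<tau> t)"
    using cp[OF t] cp0 by (simp add: field_simps exp_minus)
  have m: "H t - Z t = (c1 - c2) * exp (- \<tau> t)"
    using cm[OF t] cm0 by (simp add: field_simps exp_minus)
  show "H t = (exp (\<tau> t) + exp (- \<tau> t)) / 2 * c1 + (exp (\<tau> t) - exp (- \<tau> t)) / 2 * c2"
    using p m by (simp add: field_simps)
  show "Z t = (exp (\<tau> t) + exp (- \<tau> t)) / 2 * c2 + (exp (\<tau> t) - exp (- \<tau> t)) / 2 * c1"
    using p m by (simp add: field_simps)
qed



lemma gauss:
  assumes P: "prob_space M" and D: "distributed M lborel X std_normal_density"
  shows "integrable M X" "integrable M (\<lambda>x. (X x)^2)" "integral\<^sup>L M X = 0" "(\<integral>x. (X x)^2 \<partial>M) = 1"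
proof -
  have nn: "\<And>x. 0 \<le> std_normal_density x" by (simp add: normal_density_nonneg)
  show "integrable M X"
    using distributed_integrable[OF D, of "\<lambda>x. x"] integrable_std_normal_moment[of 1] nn by simp
  show "integrable M (\<lambda>x. (X x)^2)"
    using distributed_integrable[OF D, of "\<lambda>x. x^2"] integrable_std_normal_moment[of 2] nn by simp
  show "integral\<^sup>L M X = 0"
    using distributed_integral[OF D, of "\<lambda>x. x"] integral_std_normal_moment_odd[of 0] nn by simp
  show "(\<integral>x. (X x)^2 \<partial>M) = 1"
    using distributed_integral[OF D, of "\<lambda>x. x^2"] integral_std_normal_moment_even[of 1] nn by simp
qed

lemma decay:
  fixes \<Delta> \<tau> :: "real \<Rightarrow> real"
  assumes T: "0 \<le> T"
    and dD: "\<And>t. t \<in> {0..T} \<Longrightarrow>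
       (\<Delta> has_real_derivative (- (exp (2 * \<tau> t) + exp (- (2 * \<tau> t))) * \<Delta> t)) (at t within {0..T})"
    and D0: "\<Delta> 0 = y"
  shows "\<bar>\<Delta> T\<bar> \<le> \<bar>y\<bar> * exp (-2*T)"
proof -
  define K where "K t = exp (2 * \<tau> t) + exp (- (2 * \<tau> t))" for t
  have K2: "0 \<le> K t - 2" for t using K_ge2[of "2 * \<tau> t"] by (simp add: K_def)
  define P where "P t = \<Delta> t * exp (2 * t)" for t
  have dP: "(P has_real_derivative (- (K t - 2) * P t)) (at t within {0..T})" if "t \<in> {0..T}" for t
    unfolding P_def
    by (rule derivative_eq_intros dD[OF that] | simp)+ (simp add: K_def algebra_simps)
  have P0: "P 0 = y" by (simp add: P_def D0)
  have DP: "\<Delta> t = P t * exp (-2 * t)" for t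
    by (simp add: P_def mult.assoc flip: exp_add)
  have "(\<lambda>s. (P s)^2) T \<le> (\<lambda>s. (P s)^2) 0"
  proof (rule decr_within[where f = "\<lambda>s. (P s)^2" and f' = "\<lambda>s. 2 * P s * (- (K s - 2) * P s)" and T = T])
    show "((\<lambda>s. (P s)^2) has_real_derivative 2 * P s * (- (K s - 2) * P s)) (at s within {0..T})"
      if "s \<in> {0..T}" for s
      by (rule derivative_eq_intros dP[OF that] | simp)+
    show "2 * P s * (- (K s - 2) * P s) \<le> 0" for s
    proof -
      have "0 \<le> (K s - 2) * (P s * P s)" using K2[of s] by simp
      then show ?thesis by (simp add: algebra_simps)
    qed
  qed (use T in auto)
  then have "(P T)^2 \<le> y^2" by (simp add: P0)
  then have "\<bar>P T\<bar> \<le> \<bar>y\<bar>" by (simp add: abs_le_square_iff[symmetric])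
  then show ?thesis by (simp add: DP abs_mult mult_right_mono)
qed

lemma dyn:
  fixes M :: "'a measure" and \<rho> y g0 :: real
    and chi :: "nat \<Rightarrow> 'a \<Rightarrow> real" and xi eta :: "'a \<Rightarrow> real"
    and \<Delta> :: "nat \<Rightarrow> real \<Rightarrow> real"
    and h :: "nat \<Rightarrow> real \<Rightarrow> 'a \<Rightarrow> real"
    and z :: "real \<Rightarrow> 'a \<Rightarrow> real"
  assumes PS: "prob_space M"
    and r: "0 \<le> \<rho>" "\<rho> \<le> 1"
    and G1: "distributed M lborel (chi 1) std_normal_density"
    and G2: "distributed M lborel eta std_normal_density"
    and G3: "distributed M lborel xi std_normal_density"
    and ind: "prob_space.indep_vars M (\<lambda>_. borel) (\<lambda>i. [chi 1, eta, xi] ! i) {0, 1, 2}"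
    and c2: "\<forall>\<omega>\<in>space M. chi 2 \<omega> = \<rho> * chi 1 \<omega> + sqrt (1 - \<rho>\<^sup>2) * eta \<omega>"
    and dyn: "iw_dynamics M \<rho> g0 y chi xi \<Delta> h z"
    and \<tau>_def: "\<tau> = (\<lambda>t. integral {0..t} (\<lambda>s. g0 * \<Delta> 1 s))"
  shows "\<And>T t. 0 \<le> T \<Longrightarrow> t \<in> {0..T} \<Longrightarrow>
           (\<Delta> 1 has_real_derivative (- (exp (2 * \<tau> t) + exp (- (2 * \<tau> t))) * \<Delta> 1 t)) (at t within {0..T})"
    and "\<And>T t. 0 \<le> T \<Longrightarrow> t \<in> {0..T} \<Longrightarrow> (\<tau> has_real_derivative g0 * \<Delta> 1 t) (at t within {0..T})"
    and "\<tau> 0 = 0" and "\<Delta> 1 0 = y"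
    and "\<And>t. 0 \<le> t \<Longrightarrow> \<Delta> 2 t = y * (1 - \<rho>) + \<rho> * \<Delta> 1 t"
proof -
  interpret prob_space M by (rule PS)
  from dyn have D10: "\<Delta> 1 0 = y" and D20: "\<Delta> 2 0 = y"
    and hI: "\<And>i t \<omega>. i \<in> {1,2} \<Longrightarrow> 0 \<le> t \<Longrightarrow> \<omega> \<in> space M \<Longrightarrow>
        ((\<lambda>s. g0 * \<Delta> 1 s * z s \<omega> * Kx \<rho> i 1) has_integral (h i t \<omega> - chi i \<omega>)) {0..t}"
    and zI: "\<And>t \<omega>. 0 \<le> t \<Longrightarrow> \<omega> \<in> space M \<Longrightarrow>
        ((\<lambda>s. g0 * \<Delta> 1 s * h 1 s \<omega>) has_integral (z t \<omega> - xi \<omega>)) {0..t}"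
    and dD: "\<And>i t. i \<in> {1,2} \<Longrightarrow> 0 \<le> t \<Longrightarrow>
        (\<Delta> i has_real_derivative (- Kker M \<rho> h z i 1 t * \<Delta> 1 t)) (at t within {0..})"
    unfolding iw_dynamics_def by auto
  have contD: "continuous_on {0..} (\<Delta> 1)"
    by (rule DERIV_continuous_on[OF dD[of 1]]) auto
  have cf: "continuous_on {0..T} (\<lambda>s. g0 * \<Delta> 1 s)" for T
    by (intro continuous_intros continuous_on_subset[OF contD]) auto
  have dT: "(\<tau> has_real_derivative g0 * \<Delta> 1 t) (at t within {0..T})" if "t \<in> {0..T}" for T t
    using integral_has_vector_derivative[OF cf that]
    by (simp add: \<tau>_def has_real_derivative_iff_has_vector_derivative)
  have t0: "\<tau> 0 = 0" by (simp add: \<tau>_def)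
  define A where "A t = (exp (\<tau> t) + exp (- \<tau> t)) / 2" for t
  define B where "B t = (exp (\<tau> t) - exp (- \<tau> t)) / 2" for t
  have AB: "A t ^ 2 + B t ^ 2 = (exp (2 * \<tau> t) + exp (- (2 * \<tau> t))) / 2" for t
  proof -
    have "exp (\<tau> t) * exp (\<tau> t) = exp (2 * \<tau> t)" "exp (- \<tau> t) * exp (- \<tau> t) = exp (- (2 * \<tau> t))"
      "exp (\<tau> t) * exp (- \<tau> t) = 1" by (simp_all flip: exp_add)
    then show ?thesis by (simp add: A_def B_def power2_eq_square field_simps)
  qed
  have rep: "h 1 t \<omega> = A t * chi 1 \<omega> + B t * xi \<omega> \<and> z t \<omega> = A t * xi \<omega> + B t * chi 1 \<omega>"
    if t: "0 \<le> t" and w: "\<omega> \<in> space M" for t \<omega>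
  proof -
    have iH: "((\<lambda>s. g0 * \<Delta> 1 s * z s \<omega>) has_integral (h 1 u \<omega> - chi 1 \<omega>)) {0..u}" if "u \<in> {0..t}" for u
      using hI[of 1 u \<omega>] that w by (simp add: Kx_def)
    have iZ: "((\<lambda>s. g0 * \<Delta> 1 s * h 1 s \<omega>) has_integral (z u \<omega> - xi \<omega>)) {0..u}" if "u \<in> {0..t}" for u
      using zI[of u \<omega>] that w by simp
    show ?thesis
      using ode_omega[where f = "\<lambda>s. g0 * \<Delta> 1 s" and H = "\<lambda>s. h 1 s \<omega>" and Z = "\<lambda>s. z s \<omega>"
          and \<tau> = \<tau> and T = t and t = t, OF t cf dT t0 iH iZ] t
      by (simp add: A_def B_def)
  qed
  have rep2: "h 2 t \<omega> = \<rho> * h 1 t \<omega> + sqrt (1 - \<rho>\<^sup>2) * eta \<omega>"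
    if t: "0 \<le> t" and w: "\<omega> \<in> space M" for t \<omega>
  proof -
    have 1: "((\<lambda>s. g0 * \<Delta> 1 s * z s \<omega> * \<rho>) has_integral (h 2 t \<omega> - chi 2 \<omega>)) {0..t}"
      using hI[of 2 t \<omega>] t w by (simp add: Kx_def)
    have 2: "((\<lambda>s. g0 * \<Delta> 1 s * z s \<omega> * \<rho>) has_integral ((h 1 t \<omega> - chi 1 \<omega>) * \<rho>)) {0..t}"
      using has_integral_mult_left[OF hI[of 1 t \<omega>]] t w by (simp add: Kx_def)
    have "h 2 t \<omega> - chi 2 \<omega> = (h 1 t \<omega> - chi 1 \<omega>) * \<rho>" using has_integral_unique[OF 1 2] .
    then show ?thesis using c2 w by (simp add: algebra_simps)
  qed
  note g1 = gauss[OF PS G1] and g2 = gauss[OF PS G2] and g3 = gauss[OF PS G3]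
  have indp: "integrable M (\<lambda>\<omega>. X \<omega> * Y \<omega>) \<and> (\<integral>\<omega>. X \<omega> * Y \<omega> \<partial>M) = 0"
    if "i \<in> {0,1,2::nat}" "j \<in> {0,1,2::nat}" "i \<noteq> j"
       "X = [chi 1, eta, xi] ! i" "Y = [chi 1, eta, xi] ! j" for i j X Y
  proof -
    let ?X = "\<lambda>i. [chi 1, eta, xi] ! i"
    have ind2: "indep_vars (\<lambda>_. borel) ?X {i, j}"
      by (rule indep_vars_subset[OF ind]) (use that in auto)
    have int: "integrable M (?X k)" if "k \<in> {i, j}" for k
      using that \<open>i \<in> _\<close> \<open>j \<in> _\<close> g1(1) g2(1) g3(1) by auto
    have e0: "integral\<^sup>L M (?X k) = 0" if "k \<in> {i, j}" for k
      using that \<open>i \<in> _\<close> \<open>j \<in> _\<close> g1(3) g2(3) g3(3) by auto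
    have "integrable M (\<lambda>\<omega>. \<Prod>k\<in>{i,j}. ?X k \<omega>)"
      by (rule indep_vars_integrable[OF _ ind2 int]) auto
    moreover have "(\<integral>\<omega>. (\<Prod>k\<in>{i,j}. ?X k \<omega>) \<partial>M) = (\<Prod>k\<in>{i,j}. integral\<^sup>L M (?X k))"
      by (rule indep_vars_lebesgue_integral[OF _ ind2 int]) auto
    ultimately show ?thesis using e0 that by simp
  qed
  have p12: "integrable M (\<lambda>\<omega>. chi 1 \<omega> * xi \<omega>)" "(\<integral>\<omega>. chi 1 \<omega> * xi \<omega> \<partial>M) = 0"
    using indp[of 0 2 "chi 1" xi] by auto
  have p21: "integrable M (\<lambda>\<omega>. eta \<omega> * chi 1 \<omega>)" "(\<integral>\<omega>. eta \<omega> * chi 1 \<omega> \<partial>M) = 0"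
    using indp[of 1 0 eta "chi 1"] by auto
  have p23: "integrable M (\<lambda>\<omega>. eta \<omega> * xi \<omega>)" "(\<integral>\<omega>. eta \<omega> * xi \<omega> \<partial>M) = 0"
    using indp[of 1 2 eta xi] by auto
  have E11: "(\<integral>\<omega>. h 1 t \<omega> * h 1 t \<omega> \<partial>M) = A t ^ 2 + B t ^ 2" if t: "0 \<le> t" for t
  proof -
    have "(\<integral>\<omega>. h 1 t \<omega> * h 1 t \<omega> \<partial>M) =
        (\<integral>\<omega>. A t ^ 2 * (chi 1 \<omega>)^2 + 2 * A t * B t * (chi 1 \<omega> * xi \<omega>) + B t ^ 2 * (xi \<omega>)^2 \<partial>M)"
      apply (rule Bochner_Integration.integral_cong[OF refl])
      subgoal premises w for \<omega> using rep[OF t w] by (simp add: power2_eq_square algebra_simps)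
      done
    also have "\<dots> = A t ^ 2 + B t ^ 2"
      using g1 g3 p12 by simp
    finally show ?thesis .
  qed
  have Ez: "(\<integral>\<omega>. (z t \<omega>)^2 \<partial>M) = A t ^ 2 + B t ^ 2" if t: "0 \<le> t" for t
  proof -
    have "(\<integral>\<omega>. (z t \<omega>)^2 \<partial>M) =
        (\<integral>\<omega>. A t ^ 2 * (xi \<omega>)^2 + 2 * A t * B t * (chi 1 \<omega> * xi \<omega>) + B t ^ 2 * (chi 1 \<omega>)^2 \<partial>M)"
      apply (rule Bochner_Integration.integral_cong[OF refl])
      subgoal premises w for \<omega> using rep[OF t w] by (simp add: power2_eq_square algebra_simps)
      done
    also have "\<dots> = A t ^ 2 + B t ^ 2"
      using g1 g3 p12 by simp
    finally show ?thesis .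
  qed
  have E21: "(\<integral>\<omega>. h 2 t \<omega> * h 1 t \<omega> \<partial>M) = \<rho> * (A t ^ 2 + B t ^ 2)" if t: "0 \<le> t" for t
  proof -
    have "(\<integral>\<omega>. h 2 t \<omega> * h 1 t \<omega> \<partial>M) =
        (\<integral>\<omega>. \<rho> * (A t ^ 2 * (chi 1 \<omega>)^2 + 2 * A t * B t * (chi 1 \<omega> * xi \<omega>) + B t ^ 2 * (xi \<omega>)^2)
           + sqrt (1 - \<rho>\<^sup>2) * (A t * (eta \<omega> * chi 1 \<omega>) + B t * (eta \<omega> * xi \<omega>)) \<partial>M)"
      apply (rule Bochner_Integration.integral_cong[OF refl])
      subgoal premises w for \<omega> using rep[OF t w] rep2[OF t w] by (simp add: power2_eq_square algebra_simps)
      done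
    also have "\<dots> = \<rho> * (A t ^ 2 + B t ^ 2)"
      using g1 g3 p12 p21 p23 by simp
    finally show ?thesis .
  qed
  have K11: "Kker M \<rho> h z 1 1 t = exp (2 * \<tau> t) + exp (- (2 * \<tau> t))" if "0 \<le> t" for t
    using E11[OF that] Ez[OF that] AB[of t] by (simp add: Kker_def Kx_def)
  have K21: "Kker M \<rho> h z 2 1 t = \<rho> * (exp (2 * \<tau> t) + exp (- (2 * \<tau> t)))" if "0 \<le> t" for t
  proof -
    have "Kker M \<rho> h z 2 1 t = \<rho> * (A t ^ 2 + B t ^ 2) + (A t ^ 2 + B t ^ 2) * \<rho>"
      using E21[OF that] Ez[OF that] by (simp add: Kker_def Kx_def)
    also have "\<dots> = \<rho> * (exp (2 * \<tau> t) + exp (- (2 * \<tau> t)))"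
      by (simp only: AB) simp
    finally show ?thesis .
  qed
  have dD1: "(\<Delta> 1 has_real_derivative (- (exp (2 * \<tau> t) + exp (- (2 * \<tau> t))) * \<Delta> 1 t)) (at t within {0..})"
    if "0 \<le> t" for t
    using dD[of 1 t, unfolded K11[OF that]] that by simp
  have dD2: "(\<Delta> 2 has_real_derivative (- (\<rho> * (exp (2 * \<tau> t) + exp (- (2 * \<tau> t)))) * \<Delta> 1 t)) (at t within {0..})"
    if "0 \<le> t" for t
    using dD[of 2 t, unfolded K21[OF that]] that by simp
  show "(\<Delta> 1 has_real_derivative (- (exp (2 * \<tau> t) + exp (- (2 * \<tau> t))) * \<Delta> 1 t)) (at t within {0..T})"
    if "0 \<le> T" "t \<in> {0..T}" for T t
    by (rule DERIV_subset[OF dD1]) (use that in auto)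
  show "(\<tau> has_real_derivative g0 * \<Delta> 1 t) (at t within {0..T})"
    if "0 \<le> T" "t \<in> {0..T}" for T t using dT that(2) .
  show "\<tau> 0 = 0" by (rule t0)
  show "\<Delta> 1 0 = y" by (rule D10)
  have "\<exists>c. \<forall>t\<in>{0..}. \<Delta> 2 t - \<rho> * \<Delta> 1 t = c"
  proof (rule has_field_derivative_zero_constant)
    fix t :: real assume t: "t \<in> {0..}"
    show "((\<lambda>t. \<Delta> 2 t - \<rho> * \<Delta> 1 t) has_field_derivative 0) (at t within {0..})"
    proof -
      have t': "0 \<le> t" using t by simp
      show ?thesis
        using DERIV_diff[OF dD2[OF t'] DERIV_cmult[where c = \<rho>, OF dD1[OF t']]] by (simp add: algebra_simps)
    qed
  qed simp
  then obtain c where c: "\<And>t. 0 \<le> t \<Longrightarrow> \<Delta> 2 t - \<rho> * \<Delta> 1 t = c" by auto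
  have "c = y * (1 - \<rho>)" using c[of 0] D10 D20 by (simp add: algebra_simps)
  then show "\<Delta> 2 t = y * (1 - \<rho>) + \<rho> * \<Delta> 1 t" if "0 \<le> t" for t
    using c[OF that] by simp
qed



lemma lim_aux1: "((\<lambda>t::real. exp (-2*t)) \<longlongrightarrow> 0) at_top" by real_asymp
lemma lim_aux2: "((\<lambda>t::real. exp (-2*t) * JJ t) \<longlongrightarrow> 0) at_top" unfolding JJ_def by real_asymp

theorem mainTheorem4:
  fixes M :: "'a measure" and \<rho> y :: real
    and chi :: "nat \<Rightarrow> 'a \<Rightarrow> real" and xi eta :: "'a \<Rightarrow> real"
    and \<Delta> :: "real \<Rightarrow> nat \<Rightarrow> real \<Rightarrow> real"
    and h :: "real \<Rightarrow> nat \<Rightarrow> real \<Rightarrow> 'a \<Rightarrow> real"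
    and z :: "real \<Rightarrow> real \<Rightarrow> 'a \<Rightarrow> real"
  assumes "prob_space M"
    and "0 \<le> \<rho>" and "\<rho> \<le> 1"
    and "distributed M lborel (chi 1) std_normal_density"
    and "distributed M lborel eta std_normal_density"
    and "distributed M lborel xi std_normal_density"
    and "prob_space.indep_vars M (\<lambda>_. borel) (\<lambda>i. [chi 1, eta, xi] ! i) {0, 1, 2}"
    and "\<forall>\<omega>\<in>space M. chi 2 \<omega> = \<rho> * chi 1 \<omega> + sqrt (1 - \<rho>\<^sup>2) * eta \<omega>"
    and "\<forall>g0>0. iw_dynamics M \<rho> g0 y chi xi (\<Delta> g0) (h g0) (z g0)"
  shows "\<exists>D0 D1 D2 :: real \<Rightarrow> real.
           (\<forall>t\<ge>0. (\<lambda>g0. \<Delta> g0 2 t - (D0 t + g0 * D1 t + g0\<^sup>2 * D2 t))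
                      \<in> O[at_right 0](\<lambda>g0. g0 ^ 3)) \<and>
           (\<forall>t\<ge>0. D1 t = 0) \<and>
           (D0 \<longlongrightarrow> y * (1 - \<rho>)) at_top \<and>
           (D2 \<longlongrightarrow> 0) at_top \<and>
           (\<exists>L :: real \<Rightarrow> real.
              (\<forall>g0>0. ((\<lambda>t. (\<Delta> g0 2 t)\<^sup>2 / 2) \<longlongrightarrow> L g0) at_top) \<and>
              (\<lambda>g0. L g0 - y\<^sup>2 / 2 * (1 - \<rho>)\<^sup>2) \<in> O[at_right 0](\<lambda>g0. g0 ^ 3))"
proof -
  define \<tau> where "\<tau> g0 = (\<lambda>t. integral {0..t} (\<lambda>s. g0 * \<Delta> g0 1 s))" for g0
  note D = dyn[OF assms(1-8) assms(9)[rule_format] \<tau>_def]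
  define D0 where "D0 t = y * (1 - \<rho>) + \<rho> * (y * exp (-2*t))" for t
  define D2 where "D2 t = - \<rho> * (y^3 * exp (-2*t) * JJ t)" for t
  have part1: "(\<lambda>g0. \<Delta> g0 2 t - (D0 t + g0 * 0 + g0\<^sup>2 * D2 t)) \<in> O[at_right 0](\<lambda>g0. g0 ^ 3)"
    if t: "0 \<le> t" for t
  proof (rule bigoI)
    show "\<forall>\<^sub>F g0 in at_right 0. norm (\<Delta> g0 2 t - (D0 t + g0 * 0 + g0\<^sup>2 * D2 t)) \<le> (\<rho> * CC y t) * norm (g0 ^ 3)"
    proof (rule eventually_mono[OF eventually_at_right_real[of 0 1]])
      fix g0 :: real assume g: "g0 \<in> {0<..<1}"
      then have g0: "0 < g0" "g0 \<le> 1" by auto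
      have ce: "\<bar>\<Delta> g0 1 t - y * exp (-2*t) + g0^2 * y^3 * exp (-2*t) * JJ t\<bar> \<le> CC y t * g0^3"
        by (rule core_est[OF g0 t D(1)[OF g0(1) t] D(2)[OF g0(1) t] D(4)[OF g0(1)] D(3)[OF g0(1)]])
      have "\<Delta> g0 2 t - (D0 t + g0 * 0 + g0\<^sup>2 * D2 t) =
          \<rho> * (\<Delta> g0 1 t - y * exp (-2*t) + g0^2 * y^3 * exp (-2*t) * JJ t)"
        using D(5)[OF g0(1) t] by (simp add: D0_def D2_def algebra_simps)
      then have "norm (\<Delta> g0 2 t - (D0 t + g0 * 0 + g0\<^sup>2 * D2 t)) =
          \<rho> * \<bar>\<Delta> g0 1 t - y * exp (-2*t) + g0^2 * y^3 * exp (-2*t) * JJ t\<bar>"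
        using assms(2) by (simp add: abs_mult)
      also have "\<dots> \<le> \<rho> * (CC y t * g0^3)" using ce assms(2) by (rule mult_left_mono)
      finally show "norm (\<Delta> g0 2 t - (D0 t + g0 * 0 + g0\<^sup>2 * D2 t)) \<le> (\<rho> * CC y t) * norm (g0 ^ 3)"
        using g0 by (simp add: mult.assoc)
    qed simp
  qed
  have lim0: "(D0 \<longlongrightarrow> y * (1 - \<rho>)) at_top"
  proof -
    have "((\<lambda>t. y * (1 - \<rho>) + \<rho> * (y * exp (-2*t))) \<longlongrightarrow> y * (1 - \<rho>) + \<rho> * (y * 0)) at_top"
      by (intro tendsto_intros lim_aux1)
    then show ?thesis by (simp add: D0_def[abs_def])
  qed
  have lim2: "(D2 \<longlongrightarrow> 0) at_top"
  proof -
    have "((\<lambda>t. - \<rho> * (y^3 * (exp (-2*t) * JJ t))) \<longlongrightarrow> - \<rho> * (y^3 * 0)) at_top"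
      by (intro tendsto_intros lim_aux2)
    then show ?thesis by (simp add: D2_def[abs_def] mult.assoc)
  qed
  have limL: "((\<lambda>t. (\<Delta> g0 2 t)\<^sup>2 / 2) \<longlongrightarrow> y\<^sup>2 / 2 * (1 - \<rho>)\<^sup>2) at_top" if g0: "0 < g0" for g0
  proof -
    have "((\<lambda>t. \<Delta> g0 1 t) \<longlongrightarrow> 0) at_top"
    proof (rule Lim_null_comparison)
      show "\<forall>\<^sub>F t in at_top. norm (\<Delta> g0 1 t) \<le> \<bar>y\<bar> * exp (-2*t)"
      proof (rule eventually_mono[OF eventually_ge_at_top[of 0]])
        fix t :: real assume t: "0 \<le> t"
        show "norm (\<Delta> g0 1 t) \<le> \<bar>y\<bar> * exp (-2*t)"
          using decay[OF t D(1)[OF g0 t] D(4)[OF g0]] by simp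
      qed
      show "((\<lambda>t. \<bar>y\<bar> * exp (-2*t)) \<longlongrightarrow> 0) at_top"
        using tendsto_mult[OF tendsto_const lim_aux1, of "\<bar>y\<bar>"] by simp
    qed
    then have "((\<lambda>t. (y * (1 - \<rho>) + \<rho> * \<Delta> g0 1 t)\<^sup>2 / 2) \<longlongrightarrow> (y * (1 - \<rho>) + \<rho> * 0)\<^sup>2 / 2) at_top"
      by (intro tendsto_intros) auto
    then have "((\<lambda>t. (y * (1 - \<rho>) + \<rho> * \<Delta> g0 1 t)\<^sup>2 / 2) \<longlongrightarrow> y\<^sup>2 / 2 * (1 - \<rho>)\<^sup>2) at_top"
      by (simp add: power_mult_distrib)
    moreover have "\<forall>\<^sub>F t in at_top. (y * (1 - \<rho>) + \<rho> * \<Delta> g0 1 t)\<^sup>2 / 2 = (\<Delta> g0 2 t)\<^sup>2 / 2"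
      by (rule eventually_mono[OF eventually_ge_at_top[of 0]]) (simp add: D(5)[OF g0])
    ultimately show ?thesis by (rule Lim_transform_eventually)
  qed
  have L: "\<exists>L :: real \<Rightarrow> real.
              (\<forall>g0>0. ((\<lambda>t. (\<Delta> g0 2 t)\<^sup>2 / 2) \<longlongrightarrow> L g0) at_top) \<and>
              (\<lambda>g0. L g0 - y\<^sup>2 / 2 * (1 - \<rho>)\<^sup>2) \<in> O[at_right 0](\<lambda>g0. g0 ^ 3)"
    apply (rule exI[of _ "\<lambda>_. y\<^sup>2 / 2 * (1 - \<rho>)\<^sup>2"])
    apply (intro conjI allI impI)
     apply (erule limL)
    apply simp
    done
  have P1: "\<forall>t\<ge>0. (\<lambda>g0. \<Delta> g0 2 t - (D0 t + g0 * (\<lambda>_. 0::real) t + g0\<^sup>2 * D2 t)) \<in> O[at_right 0](\<lambda>g0. g0 ^ 3)"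
    using part1 by simp
  show ?thesis
    apply (rule exI[of _ D0], rule exI[of _ "\<lambda>_. 0"], rule exI[of _ D2])
    using P1 lim0 lim2 L by blast
qed


end
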